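(* Let $\gamma=(1+\sqrt5)/2$ and let $(\mathbf{w}_i)_{i\ge0}$ be a Fibonacci sequence in $\mathrm{GL}_2(\mathbb{R})$ (i.e. $\mathbf{w}_{i+2}=\mathbf{w}_{i+1}\mathbf{w}_i$). Suppose there are real $c_1,c_2>0$ with $c_1\|\mathbf{w}_i\|\|\mathbf{w}_{i+1}\|\le\|\mathbf{w}_{i+2}\|\le c_2\|\mathbf{w}_i\|\|\mathbf{w}_{i+1}\|$ for all $i\ge0$. Then there are constants $c_3,c_4>0$ such that for all $i\ge0$, $c_3\|\mathbf{w}_i\|^\gamma\le\|\mathbf{w}_{i+1}\|\le c_4\|\mathbf{w}_i\|^\gamma$ and $c_3|\det(\mathbf{w}_i)|^\gamma\le|\det(\mathbf{w}_{i+1})|\le c_4|\det(\mathbf{w}_i)|^\gamma$. Moreover, if $\alpha,\beta\ge0$ are such that $(c_2\|\mathbf{w}_i\|)^\alpha\le|\det(\mathbf{w}_i)|\le(c_1\|\mathbf{w}_i\|)^\beta$ holds for $i=0$ and $i=1$, then it holds for every $i\ge0$.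
   Context: For a $2\times2$ real matrix $\mathbf{w}$, $\|\mathbf{w}\|$ denotes the largest absolute value of its coefficients. *)

theory Defs
  imports "HOL-Analysis.Analysis"
begin

definition maxnorm :: "real^2^2 \<Rightarrow> real" where
  "maxnorm w = Max {\<bar>w $ i $ j\<bar> | i j. True}"

definition golden :: real where
  "golden = (1 + sqrt 5) / 2"

end

theory Submission
  imports Defs
begin

lemma golden_facts: "golden * golden = golden + 1" "golden > 1" "golden < 2"
proof -
  have s: "sqrt 5 * sqrt 5 = 5" by simp
  have "sqrt 5 > 2" by (simp add: real_less_rsqrt)
  moreover have "sqrt 5 < 3" by (simp add: real_sqrt_less_iff real_less_lsqrt)
  ultimately show "golden * golden = golden + 1" "golden > 1" "golden < 2"
    unfolding golden_def using s by (auto simp: field_simps)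
qed

lemma contr_bound:
  fixes b :: "nat \<Rightarrow> real"
  assumes "\<And>i. \<bar>b (Suc i)\<bar> \<le> q * \<bar>b i\<bar> + E" "0 \<le> q" "q < 1" "E \<ge> 0"
  shows "\<bar>b i\<bar> \<le> \<bar>b 0\<bar> + E / (1 - q)"
proof (induction i)
  case 0
  then show ?case using assms by simp
next
  case (Suc i)
  have "q * \<bar>b i\<bar> \<le> q * (\<bar>b 0\<bar> + E / (1 - q))"
    using Suc assms by (simp add: mult_left_mono)
  also have "\<dots> \<le> \<bar>b 0\<bar> - E + E / (1 - q)"
  proof -
    have "q * (E / (1 - q)) = E/(1-q) - E" using assms by (simp add: field_simps)
    moreover have "q * \<bar>b 0\<bar> \<le> \<bar>b 0\<bar>" using assms by (simp add: mult_left_le_one_le)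
    ultimately show ?thesis by (simp add: distrib_left)
  qed
  finally show ?case using assms(1)[of i] by linarith
qed

lemma log_bound:
  fixes a :: "nat \<Rightarrow> real"
  assumes "\<And>i. \<bar>a (i+2) - a (i+1) - a i\<bar> \<le> E"
  shows "\<exists>B. \<forall>i. \<bar>a (i+1) - golden * a i\<bar> \<le> B"
proof -
  define b where "b i = a (i+1) - golden * a i" for i
  have E: "E \<ge> 0" using assms[of 0] by linarith
  have g: "golden * golden = golden + 1" "golden > 1" "golden < 2" using golden_facts by auto
  have step: "\<bar>b (Suc i)\<bar> \<le> (golden - 1) * \<bar>b i\<bar> + E" for i
  proof -
    have h: "(golden - 1) * golden = 1" using g(1) by (simp add: algebra_simps)
    have h2: "(golden - 1) * b i = (golden-1)*a(i+1) - ((golden-1)*golden) * a i"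
      unfolding b_def by (simp add: algebra_simps)
    have "b (Suc i) = (a (i+2) - a (i+1) - a i) - (golden - 1) * b i"
      unfolding h2 h by (simp add: b_def algebra_simps)
    hence "\<bar>b (Suc i)\<bar> \<le> \<bar>a (i+2) - a (i+1) - a i\<bar> + \<bar>(golden - 1) * b i\<bar>" by linarith
    also have "\<bar>(golden - 1) * b i\<bar> = (golden - 1) * \<bar>b i\<bar>" using g by (simp add: abs_mult)
    finally show ?thesis using assms[of i] by linarith
  qed
  have "\<bar>b i\<bar> \<le> \<bar>b 0\<bar> + E / (1 - (golden - 1))" for i
    by (rule contr_bound[of b, OF step]) (use g E in auto)
  thus ?thesis unfolding b_def by blast
qed

lemma seq_bound:
  fixes x :: "nat \<Rightarrow> real"
  assumes pos: "\<And>i. x i > 0" and c1: "c1 > 0" and c2: "c2 > 0"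
    and lo: "\<And>i. c1 * x i * x (i+1) \<le> x (i+2)"
    and up: "\<And>i. x (i+2) \<le> c2 * x i * x (i+1)"
  shows "\<exists>B. \<forall>i. exp (-B) * x i powr golden \<le> x (i+1) \<and> x (i+1) \<le> exp B * x i powr golden"
proof -
  define a where "a i = ln (x i)" for i
  have "\<bar>a (i+2) - a (i+1) - a i\<bar> \<le> \<bar>ln c1\<bar> + \<bar>ln c2\<bar>" for i
  proof -
    have "ln (c1 * x i * x (i+1)) \<le> ln (x (i+2))" using lo[of i] pos c1 by simp
    moreover have "ln (x (i+2)) \<le> ln (c2 * x i * x (i+1))" using up[of i] pos c2 by simp
    moreover have "ln (c1 * x i * x (i+1)) = ln c1 + ln (x i) + ln (x (i+1))"
      using pos[of i] pos[of "i+1"] c1 by (simp add: ln_mult)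
    moreover have "ln (c2 * x i * x (i+1)) = ln c2 + ln (x i) + ln (x (i+1))"
      using pos[of i] pos[of "i+1"] c2 by (simp add: ln_mult)
    ultimately show ?thesis unfolding a_def by linarith
  qed
  then obtain B where B: "\<And>i. \<bar>a (i+1) - golden * a i\<bar> \<le> B" using log_bound by blast
  show ?thesis
  proof (intro exI allI conjI)
    fix i
    have e: "x i powr golden = exp (golden * a i)" unfolding a_def powr_def using pos[of i] by simp
    have e2: "x (i+1) = exp (a (i+1))" unfolding a_def using pos by simp
    have "exp (-B) * x i powr golden = exp (-B + golden * a i)" by (metis e exp_add)
    also have "\<dots> \<le> exp (a (i+1))" using B[of i] by simp
    finally show "exp (-B) * x i powr golden \<le> x (i+1)" using e2 by simp
    have "exp (a (i+1)) \<le> exp (B + golden * a i)" using B[of i] by simp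
    also have "\<dots> = exp B * x i powr golden" by (metis e exp_add)
    finally show "x (i+1) \<le> exp B * x i powr golden" using e2 by simp
  qed
qed

lemma maxnorm_pos:
  assumes "invertible (w :: real^2^2)"
  shows "maxnorm w > 0"
proof -
  have "w \<noteq> 0"
  proof
    assume "w = 0"
    obtain A' where "w ** A' = mat 1" using assms unfolding invertible_def by blast
    with \<open>w = 0\<close> have "(0::real^2^2) = mat 1" by simp
    hence "((0::real^2^2) $ (1::2)) $ (1::2) = ((mat 1::real^2^2) $ (1::2)) $ (1::2)" by simp
    thus False by (simp add: mat_def)
  qed
  then obtain i j where ij: "w $ i $ j \<noteq> 0" by (metis vec_eq_iff zero_index)
  have fin: "finite {\<bar>w $ i $ j\<bar> | i j. True}"
  proof -
    have "{\<bar>w $ i $ j\<bar> | i j. True} = (\<lambda>(i,j). \<bar>w $ i $ j\<bar>) ` UNIV" by auto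
    thus ?thesis by simp
  qed
  have "\<bar>w $ i $ j\<bar> \<le> maxnorm w" unfolding maxnorm_def by (rule Max_ge[OF fin]) blast
  thus ?thesis using ij by linarith
qed

theorem proposition5p3:
  fixes w :: "nat \<Rightarrow> real^2^2" and c1 c2 :: real
  assumes inv: "\<And>i. invertible (w i)"
    and fib: "\<And>i. w (i + 2) = w (i + 1) ** w i"
    and c1: "c1 > 0" and c2: "c2 > 0"
    and lower: "\<And>i. c1 * maxnorm (w i) * maxnorm (w (i + 1)) \<le> maxnorm (w (i + 2))"
    and upper: "\<And>i. maxnorm (w (i + 2)) \<le> c2 * maxnorm (w i) * maxnorm (w (i + 1))"
  shows "(\<exists>c3 c4. c3 > 0 \<and> c4 > 0 \<and>
           (\<forall>i. c3 * maxnorm (w i) powr golden \<le> maxnorm (w (i + 1)) \<and>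
                maxnorm (w (i + 1)) \<le> c4 * maxnorm (w i) powr golden \<and>
                c3 * \<bar>det (w i)\<bar> powr golden \<le> \<bar>det (w (i + 1))\<bar> \<and>
                \<bar>det (w (i + 1))\<bar> \<le> c4 * \<bar>det (w i)\<bar> powr golden))
       \<and> (\<forall>\<alpha> \<beta> :: real. \<alpha> \<ge> 0 \<longrightarrow> \<beta> \<ge> 0 \<longrightarrow>
            (\<forall>i\<in>{0, 1}. (c2 * maxnorm (w i)) powr \<alpha> \<le> \<bar>det (w i)\<bar> \<and>
                          \<bar>det (w i)\<bar> \<le> (c1 * maxnorm (w i)) powr \<beta>) \<longrightarrow>
            (\<forall>i. (c2 * maxnorm (w i)) powr \<alpha> \<le> \<bar>det (w i)\<bar> \<and>
                 \<bar>det (w i)\<bar> \<le> (c1 * maxnorm (w i)) powr \<beta>))"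
proof
  have np: "\<And>i. maxnorm (w i) > 0" using inv maxnorm_pos by blast
  have dp: "\<And>i. \<bar>det (w i)\<bar> > 0" using inv invertible_det_nz by force
  have dm: "\<And>i. \<bar>det (w (i+2))\<bar> = \<bar>det (w i)\<bar> * \<bar>det (w (i+1))\<bar>"
    using fib by (simp add: det_mul abs_mult)
  obtain B1 where B1: "\<And>i. exp (-B1) * maxnorm (w i) powr golden \<le> maxnorm (w (i+1)) \<and>
      maxnorm (w (i+1)) \<le> exp B1 * maxnorm (w i) powr golden"
    using seq_bound[of "\<lambda>i. maxnorm (w i)", OF np c1 c2 lower upper] by blast
  obtain B2 where B2: "\<And>i. exp (-B2) * \<bar>det (w i)\<bar> powr golden \<le> \<bar>det (w (i+1))\<bar> \<and>
      \<bar>det (w (i+1))\<bar> \<le> exp B2 * \<bar>det (w i)\<bar> powr golden"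
    using seq_bound[of "\<lambda>i. \<bar>det (w i)\<bar>" 1 1, OF dp] dm by auto
  show "\<exists>c3 c4. c3 > 0 \<and> c4 > 0 \<and>
           (\<forall>i. c3 * maxnorm (w i) powr golden \<le> maxnorm (w (i + 1)) \<and>
                maxnorm (w (i + 1)) \<le> c4 * maxnorm (w i) powr golden \<and>
                c3 * \<bar>det (w i)\<bar> powr golden \<le> \<bar>det (w (i + 1))\<bar> \<and>
                \<bar>det (w (i + 1))\<bar> \<le> c4 * \<bar>det (w i)\<bar> powr golden)"
  proof (intro exI conjI allI)
    fix i
    let ?c3 = "min (exp (-B1)) (exp (-B2))" and ?c4 = "max (exp B1) (exp B2)"
    show "?c3 > 0" by simp
    show "?c4 > 0" by (metis exp_gt_zero max.strict_coboundedI1)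
    have p1: "maxnorm (w i) powr golden \<ge> 0" "\<bar>det (w i)\<bar> powr golden \<ge> 0" by auto
    show "?c3 * maxnorm (w i) powr golden \<le> maxnorm (w (i + 1))"
      using B1[of i] mult_right_mono[OF min.cobounded1 p1(1)] by (meson order_trans)
    show "maxnorm (w (i + 1)) \<le> ?c4 * maxnorm (w i) powr golden"
      using B1[of i] mult_right_mono[OF max.cobounded1 p1(1)] by (meson order_trans)
    show "?c3 * \<bar>det (w i)\<bar> powr golden \<le> \<bar>det (w (i + 1))\<bar>"
      using B2[of i] mult_right_mono[OF min.cobounded2 p1(2)] by (meson order_trans)
    show "\<bar>det (w (i + 1))\<bar> \<le> ?c4 * \<bar>det (w i)\<bar> powr golden"
      using B2[of i] mult_right_mono[OF max.cobounded2 p1(2)] by (meson order_trans)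
  qed
  show "\<forall>\<alpha> \<beta> :: real. \<alpha> \<ge> 0 \<longrightarrow> \<beta> \<ge> 0 \<longrightarrow>
            (\<forall>i\<in>{0, 1}. (c2 * maxnorm (w i)) powr \<alpha> \<le> \<bar>det (w i)\<bar> \<and>
                          \<bar>det (w i)\<bar> \<le> (c1 * maxnorm (w i)) powr \<beta>) \<longrightarrow>
            (\<forall>i. (c2 * maxnorm (w i)) powr \<alpha> \<le> \<bar>det (w i)\<bar> \<and>
                 \<bar>det (w i)\<bar> \<le> (c1 * maxnorm (w i)) powr \<beta>)"
  proof (intro allI impI)
    fix \<alpha> \<beta> :: real and i :: nat
    assume a: "\<alpha> \<ge> 0" and b: "\<beta> \<ge> 0"
      and h: "\<forall>i\<in>{0, 1}. (c2 * maxnorm (w i)) powr \<alpha> \<le> \<bar>det (w i)\<bar> \<and>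
                          \<bar>det (w i)\<bar> \<le> (c1 * maxnorm (w i)) powr \<beta>"
    let ?P = "\<lambda>i. (c2 * maxnorm (w i)) powr \<alpha> \<le> \<bar>det (w i)\<bar> \<and>
                 \<bar>det (w i)\<bar> \<le> (c1 * maxnorm (w i)) powr \<beta>"
    have "?P i \<and> ?P (i+1)"
    proof (induction i)
      case 0
      then show ?case using h by simp
    next
      case (Suc i)
      have "?P (i+2)"
      proof
        have "(c2 * maxnorm (w (i+2))) powr \<alpha> \<le> (c2 * (c2 * maxnorm (w i) * maxnorm (w (i+1)))) powr \<alpha>"
          using upper[of i] np[of "i+2"] c2 a by (intro powr_mono2) auto
        also have "\<dots> = (c2 * maxnorm (w i)) powr \<alpha> * (c2 * maxnorm (w (i+1))) powr \<alpha>"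
          using c2 np[of i] np[of "i+1"] by (simp add: powr_mult[symmetric] algebra_simps)
        also have "\<dots> \<le> \<bar>det (w i)\<bar> * \<bar>det (w (i+1))\<bar>"
          using Suc by (intro mult_mono) auto
        finally show "(c2 * maxnorm (w (i+2))) powr \<alpha> \<le> \<bar>det (w (i+2))\<bar>" using dm by simp
        have "\<bar>det (w (i+2))\<bar> = \<bar>det (w i)\<bar> * \<bar>det (w (i+1))\<bar>" using dm by simp
        also have "\<dots> \<le> (c1 * maxnorm (w i)) powr \<beta> * (c1 * maxnorm (w (i+1))) powr \<beta>"
          using Suc by (intro mult_mono) auto
        also have "\<dots> = (c1 * (c1 * maxnorm (w i) * maxnorm (w (i+1)))) powr \<beta>"
          using c1 np[of i] np[of "i+1"] by (simp add: powr_mult[symmetric] algebra_simps)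
        also have "\<dots> \<le> (c1 * maxnorm (w (i+2))) powr \<beta>"
          using lower[of i] np[of i] np[of "i+1"] c1 b by (intro powr_mono2) auto
        finally show "\<bar>det (w (i+2))\<bar> \<le> (c1 * maxnorm (w (i+2))) powr \<beta>" .
      qed
      then show ?case using Suc by simp
    qed
    thus "?P i" by simp
  qed
qed

end
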